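(* Let $Y$ be a random variable with values in $[0,1]$ and continuous distribution function $F$. Then the following two properties hold simultaneously: (a) for every $a\in(0,1)$, \[ 2\min\{Y,1-Y\}\,\big|\,\big(2\min\{Y,1-Y\}\le a\big) \;\stackrel{\mathcal D}{=}\; a\cdot 2\min\{Y,1-Y\}, \] and (b) $I(Y\le 1/2)$ and $\max\{Y,1-Y\}$ are independent, if and only if there exist $c\in[0,1]$ and $\delta>0$ such that \[ F(x)=\begin{cases} c\,2^\delta x^\delta, & x\in[0,1/2],\\ 1-(1-c)\,2^\delta(1-x)^\delta, & x\in[1/2,1].\end{cases} \]
   Context: For a random variable $X$ and an event $A$ of positive probability, $X\,|\,A$ denotes the conditional distribution of $X$ given $A$. $I(\cdot)$ denotes the indicator of an event. $\stackrel{\mathcal D}{=}$ denotes equality in distribution. *)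

theory Defs
  imports "HOL-Probability.Probability"
begin

end

theory Submission imports Defs begin

lemma mult_cauchy:
  fixes G :: "real \<Rightarrow> real"
  assumes mono: "\<And>x y. 0 < x \<Longrightarrow> x \<le> y \<Longrightarrow> y \<le> 1 \<Longrightarrow> G x \<le> G y"
    and pos: "\<And>x. 0 < x \<Longrightarrow> x \<le> 1 \<Longrightarrow> G x > 0"
    and G1: "G 1 = 1"
    and mult: "\<And>a x. 0 < a \<Longrightarrow> a < 1 \<Longrightarrow> 0 < x \<Longrightarrow> x \<le> 1 \<Longrightarrow> G (a*x) = G a * G x"
    and small: "x0 > 0" "x0 \<le> 1" "G x0 < 1"
  shows "\<exists>\<delta>>0. \<forall>x. 0 < x \<longrightarrow> x \<le> 1 \<longrightarrow> G x = x powr \<delta>"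
proof -
  define h where "h t = ln (G (exp (-t)))" for t
  have h0: "h 0 = 0" using G1 by (simp add: h_def)
  have hadd: "h (s+t) = h s + h t" if "s \<ge> 0" "t \<ge> 0" for s t
  proof (cases "s = 0")
    case True thus ?thesis by (simp add: h0)
  next
    case False
    hence "0 < s" using that by simp
    have "exp (-(s+t)) = exp (-s) * exp (-t)" by (simp add: exp_add[symmetric])
    moreover have "G (exp (-s) * exp (-t)) = G (exp (-s)) * G (exp (-t))"
      using \<open>0<s\<close> that by (intro mult) auto
    moreover have "G (exp (-s)) > 0" "G (exp (-t)) > 0" using that by (intro pos; simp)+
    ultimately show ?thesis by (simp add: h_def ln_mult)
  qed
  have hanti: "h t \<le> h s" if "0 \<le> s" "s \<le> t" for s t
    unfolding h_def using that by (subst ln_le_cancel_iff) (auto intro!: pos mono)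
  have hmul: "h (real k * s) = real k * h s" if "s \<ge> 0" for k s
  proof (induction k)
    case 0 thus ?case by (simp add: h0)
  next
    case (Suc k)
    have "h (real (Suc k) * s) = h (real k * s + s)" by (simp add: algebra_simps)
    also have "\<dots> = h (real k * s) + h s" using that by (intro hadd) auto
    finally show ?case using Suc by (simp add: algebra_simps)
  qed
  define L where "L = h 1"
  have hrat: "h (real k / real n) = real k / real n * L" if "n > 0" for k n
  proof -
    have "L = h (real n * (1/real n))" using that by (simp add: L_def)
    also have "\<dots> = real n * h (1/real n)" by (rule hmul) simp
    finally have e: "h (1/real n) = L / real n" using that by (simp add: field_simps)
    have "h (real k / real n) = h (real k * (1/real n))" by simp
    also have "\<dots> = real k * h (1/real n)" by (rule hmul) simp
    finally show ?thesis using e by simp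
  qed
  have L0: "L \<le> 0" using hanti[of 0 1] h0 L_def by simp
  have hlin: "h t = t * L" if t0: "t \<ge> 0" for t
  proof (rule ccontr)
    assume ne: "h t \<noteq> t * L"
    define d where "d = \<bar>h t - t*L\<bar>"
    have dpos: "d > 0" using ne by (simp add: d_def)
    obtain n :: nat where n: "-L / d < real n" using reals_Archimedean2 by blast
    define m where "m = Suc n"
    have mpos: "real m > 0" by (simp add: m_def)
    have mn: "-L / d < real m" using n by (simp add: m_def)
    define k where "k = nat \<lfloor>real m * t\<rfloor>"
    have kk: "real k = of_int \<lfloor>real m * t\<rfloor>" using t0 by (simp add: k_def)
    have k1: "real k \<le> real m * t" using kk by linarith
    have k2: "real m * t < real k + 1" using kk by linarith
    define a where "a = real k / real m"
    have a1: "a \<le> t" using k1 mpos by (simp add: a_def field_simps)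
    have a2: "t < a + 1 / real m" using k2 mpos by (simp add: a_def field_simps)
    have "h t \<le> h a" by (rule hanti) (use a1 in \<open>auto simp: a_def\<close>)
    hence x1: "h t \<le> a * L" using hrat[of m k] mpos by (simp add: a_def)
    have "h (real (Suc k) / real m) \<le> h t"
      by (rule hanti) (use t0 a2 mpos in \<open>auto simp: a_def field_simps\<close>)
    hence x2: "(a + 1/real m) * L \<le> h t" using hrat[of m "Suc k"] mpos by (simp add: a_def add_divide_distrib add.commute)
    have p1: "(t - a) * (-L) \<le> (1 / real m) * (-L)"
      using a2 L0 by (intro mult_right_mono) auto
    have p2: "0 \<le> (t - a) * (-L)" using a1 L0 by (intro mult_nonneg_nonneg) auto
    have "d \<le> (1 / real m) * (-L)"
      using x1 x2 p1 p2 unfolding d_def by (auto simp: algebra_simps abs_if)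
    moreover have "-L < d * real m" using mn dpos by (simp add: field_simps)
    ultimately show False using mpos dpos by (simp add: field_simps)
  qed
  define \<delta> where "\<delta> = -L"
  have Gx: "G x = x powr \<delta>" if "0 < x" "x \<le> 1" for x
  proof -
    have "h (- ln x) = ln (G x)" using that by (simp add: h_def)
    hence "ln (G x) = - ln x * L" using hlin[of "- ln x"] that by simp
    hence "G x = exp (- ln x * L)" using pos[OF that] by (metis exp_ln)
    thus ?thesis using that by (simp add: powr_def \<delta>_def mult.commute)
  qed
  have "\<delta> \<noteq> 0" using Gx[of x0] small by auto
  moreover have "\<delta> \<ge> 0" using L0 by (simp add: \<delta>_def)
  ultimately show ?thesis using Gx by (intro exI[of _ \<delta>]) auto
qed
lemma vimage_sigma_sub:
  fixes f :: "'a \<Rightarrow> real"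
  assumes "G \<subseteq> Pow \<Omega>" "\<And>a. {w\<in>\<Omega>. f w \<le> a} \<in> sigma_sets \<Omega> G"
  shows "{f -` A \<inter> \<Omega> | A. A \<in> sets borel} \<subseteq> sigma_sets \<Omega> G"
proof -
  have "f \<in> borel_measurable (sigma \<Omega> G)"
    unfolding borel_measurable_iff_le using assms by (simp add: sets_measure_of space_measure_of_conv)
  thus ?thesis using measurable_sets[of f "sigma \<Omega> G" borel] assms(1)
    by (auto simp: sets_measure_of space_measure_of_conv)
qed

theorem lemma2:
  fixes M :: "'a measure" and Y :: "'a \<Rightarrow> real"
  assumes "prob_space M"
    and "Y \<in> borel_measurable M"
    and "\<forall>\<omega>\<in>space M. Y \<omega> \<in> {0..1}"
    and "continuous_on UNIV (cdf (distr M borel Y))"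
  shows "((\<forall>a\<in>{0<..<1::real}.
             measure M {\<omega>\<in>space M. 2 * min (Y \<omega>) (1 - Y \<omega>) \<le> a} > 0 \<and>
             distr (uniform_measure M {\<omega>\<in>space M. 2 * min (Y \<omega>) (1 - Y \<omega>) \<le> a})
                   borel (\<lambda>\<omega>. 2 * min (Y \<omega>) (1 - Y \<omega>))
             = distr M borel (\<lambda>\<omega>. a * (2 * min (Y \<omega>) (1 - Y \<omega>))))
         \<and> prob_space.indep_var M borel (\<lambda>\<omega>. indicator {..1/2::real} (Y \<omega>) :: real)
                                  borel (\<lambda>\<omega>. max (Y \<omega>) (1 - Y \<omega>)))
     \<longleftrightarrow>
     (\<exists>c\<in>{0..1::real}. \<exists>\<delta>>0::real. \<forall>x.
        (x \<in> {0..1/2} \<longrightarrow> cdf (distr M borel Y) x = c * 2 powr \<delta> * x powr \<delta>) \<and>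
        (x \<in> {1/2..1} \<longrightarrow> cdf (distr M borel Y) x = 1 - (1 - c) * 2 powr \<delta> * (1 - x) powr \<delta>))"
proof -
  interpret P: prob_space M by fact
  note Ym[measurable] = assms(2)
  have Y01: "0 \<le> Y \<omega>" "Y \<omega> \<le> 1" if "\<omega> \<in> space M" for \<omega> using assms(3) that by auto
  define N where "N = distr M borel Y"
  define F where "F = cdf N"
  have RD: "real_distribution N" unfolding N_def by (rule P.real_distribution_distr) simp
  have Fev: "P.prob {\<omega>\<in>space M. Y \<omega> \<le> x} = F x" for x
  proof -
    have "F x = P.prob (Y -` {..x} \<inter> space M)" by (simp add: F_def cdf_def N_def measure_distr)
    also have "Y -` {..x} \<inter> space M = {\<omega>\<in>space M. Y \<omega> \<le> x}" by auto
    finally show ?thesis by simp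
  qed
  have Fcont: "isCont F x" for x using assms(4)
    by (simp add: F_def N_def continuous_on_eq_continuous_at)
  have Fpt: "P.prob {\<omega>\<in>space M. Y \<omega> = x} = 0" for x
  proof -
    have "measure N {x} = 0" using finite_borel_measure.isCont_cdf[OF real_distribution.finite_borel_measure_M[OF RD]] Fcont F_def by blast
    moreover have "measure N {x} = P.prob (Y -` {x} \<inter> space M)" by (simp add: N_def measure_distr)
    moreover have "Y -` {x} \<inter> space M = {\<omega>\<in>space M. Y \<omega> = x}" by auto
    ultimately show ?thesis by simp
  qed
  have Flt: "P.prob {\<omega>\<in>space M. Y \<omega> < x} = F x" for x
  proof -
    have "{\<omega>\<in>space M. Y \<omega> \<le> x} = {\<omega>\<in>space M. Y \<omega> < x} \<union> {\<omega>\<in>space M. Y \<omega> = x}" by auto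
    moreover have "{\<omega>\<in>space M. Y \<omega> < x} \<in> P.events" "{\<omega>\<in>space M. Y \<omega> = x} \<in> P.events"
      by measurable
    moreover have "{\<omega>\<in>space M. Y \<omega> < x} \<inter> {\<omega>\<in>space M. Y \<omega> = x} = {}" by auto
    ultimately have "F x = P.prob {\<omega>\<in>space M. Y \<omega> < x} + P.prob {\<omega>\<in>space M. Y \<omega> = x}"
      using Fev[of x] by (simp add: P.finite_measure_Union)
    thus ?thesis using Fpt by simp
  qed
  have Fge: "P.prob {\<omega>\<in>space M. x \<le> Y \<omega>} = 1 - F x" for x
  proof -
    have "{\<omega>\<in>space M. x \<le> Y \<omega>} = space M - {\<omega>\<in>space M. Y \<omega> < x}" by auto
    moreover have "{\<omega>\<in>space M. Y \<omega> < x} \<in> P.events" by measurable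
    ultimately show ?thesis using P.prob_compl Flt by metis
  qed
  have F0: "F 0 = 0"
  proof -
    have "{\<omega>\<in>space M. Y \<omega> \<le> 0} = {\<omega>\<in>space M. Y \<omega> = 0}" using Y01 by force
    thus ?thesis using Fev Fpt by metis
  qed
  have F1: "F 1 = 1"
  proof -
    have "{\<omega>\<in>space M. Y \<omega> \<le> 1} = space M" using Y01 by force
    thus ?thesis using Fev P.prob_space by metis
  qed
  define Z where "Z \<omega> = 2 * min (Y \<omega>) (1 - Y \<omega>)" for \<omega>
  have Zm[measurable]: "Z \<in> borel_measurable M" unfolding Z_def by measurable
  define G where "G z = P.prob {\<omega>\<in>space M. Z \<omega> \<le> z}" for z
  have Glt1: "G z = F (z/2) + 1 - F (1 - z/2)" if "z < 1" for z
  proof -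
    have "{\<omega>\<in>space M. Z \<omega> \<le> z} = {\<omega>\<in>space M. Y \<omega> \<le> z/2} \<union> {\<omega>\<in>space M. 1 - z/2 \<le> Y \<omega>}"
      by (auto simp: Z_def min_def)
    moreover have "{\<omega>\<in>space M. Y \<omega> \<le> z/2} \<inter> {\<omega>\<in>space M. 1 - z/2 \<le> Y \<omega>} = {}" using that by auto
    moreover have "{\<omega>\<in>space M. Y \<omega> \<le> z/2} \<in> P.events" "{\<omega>\<in>space M. 1 - z/2 \<le> Y \<omega>} \<in> P.events"
      by measurable
    ultimately have "G z = P.prob {\<omega>\<in>space M. Y \<omega> \<le> z/2} + P.prob {\<omega>\<in>space M. 1 - z/2 \<le> Y \<omega>}"
      unfolding G_def by (simp add: P.finite_measure_Union)
    thus ?thesis using Fev[of "z/2"] Fge[of "1 - z/2"] by linarith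
  qed
  have Gge1: "G z = 1" if "z \<ge> 1" for z
  proof -
    have "{\<omega>\<in>space M. Z \<omega> \<le> z} = space M" using that by (auto simp: Z_def min_def)
    thus ?thesis by (simp add: G_def P.prob_space)
  qed
  have Gneg: "G z = 0" if "z < 0" for z
  proof -
    have "{\<omega>\<in>space M. Z \<omega> \<le> z} = {}" using that Y01 by (force simp: Z_def min_def)
    thus ?thesis unfolding G_def by (metis measure_empty)
  qed
  have G0: "G 0 = 0" using Glt1[of 0] F0 F1 by simp
  have Gmono: "G x \<le> G y" if "x \<le> y" for x y
    unfolding G_def using that by (intro P.finite_measure_mono) auto
  have indep_iff: "P.indep_var borel (\<lambda>\<omega>. indicator {..1/2::real} (Y \<omega>) :: real) borel Z"
    if ind: "P.indep_var borel (\<lambda>\<omega>. indicator {..1/2::real} (Y \<omega>) :: real) borel (\<lambda>\<omega>. max (Y \<omega>) (1 - Y \<omega>))"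
  proof -
    have "P.indep_var borel (id \<circ> (\<lambda>\<omega>. indicator {..1/2::real} (Y \<omega>) :: real)) borel
             ((\<lambda>w. 2 - 2 * w) \<circ> (\<lambda>\<omega>. max (Y \<omega>) (1 - Y \<omega>)))"
      by (rule P.indep_var_compose[OF ind]) auto
    moreover have "(\<lambda>w. 2 - 2 * w) \<circ> (\<lambda>\<omega>. max (Y \<omega>) (1 - Y \<omega>)) = Z"
      by (auto simp: Z_def max_def min_def fun_eq_iff)
    ultimately show ?thesis by simp
  qed
  have fwd: "\<exists>c\<in>{0..1::real}. \<exists>\<delta>>0::real. \<forall>x.
        (x \<in> {0..1/2} \<longrightarrow> F x = c * 2 powr \<delta> * x powr \<delta>) \<and>
        (x \<in> {1/2..1} \<longrightarrow> F x = 1 - (1 - c) * 2 powr \<delta> * (1 - x) powr \<delta>)"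
    if La: "\<forall>a\<in>{0<..<1::real}. G a > 0 \<and>
             distr (uniform_measure M {\<omega>\<in>space M. Z \<omega> \<le> a}) borel Z = distr M borel (\<lambda>\<omega>. a * Z \<omega>)"
    and Lb: "P.indep_var borel (\<lambda>\<omega>. indicator {..1/2::real} (Y \<omega>) :: real) borel (\<lambda>\<omega>. max (Y \<omega>) (1 - Y \<omega>))"
  proof -
    have Gmult: "G (a*x) = G a * G x" if "0 < a" "a < 1" "0 < x" "x \<le> 1" for a x
    proof -
      define S where "S = {\<omega>\<in>space M. Z \<omega> \<le> a}"
      have Ga: "G a > 0" and eq: "distr (uniform_measure M S) borel Z = distr M borel (\<lambda>\<omega>. a * Z \<omega>)"
        using La that by (auto simp: S_def)
      have Sev: "S \<in> P.events" unfolding S_def by measurable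
      have e1: "emeasure M S \<noteq> 0" using Ga by (simp add: S_def G_def P.emeasure_eq_measure)
      have e2: "emeasure M S \<noteq> \<infinity>" by (simp add: P.emeasure_eq_measure)
      have "measure (distr (uniform_measure M S) borel Z) {..a*x} =
            measure (uniform_measure M S) (Z -` {..a*x} \<inter> space M)"
        by (subst measure_distr) auto
      also have "\<dots> = P.prob (S \<inter> (Z -` {..a*x} \<inter> space M)) / P.prob S"
        using e1 e2 by (subst measure_uniform_measure) auto
      also have "S \<inter> (Z -` {..a*x} \<inter> space M) = {\<omega>\<in>space M. Z \<omega> \<le> a*x}"
        using that by (auto simp: S_def) (metis mult_left_le mult_le_cancel_left1 order_trans less_le)
      finally have l: "measure (distr (uniform_measure M S) borel Z) {..a*x} = G (a*x) / G a"
        by (simp add: G_def S_def)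
      have "measure (distr M borel (\<lambda>\<omega>. a * Z \<omega>)) {..a*x} =
            P.prob ((\<lambda>\<omega>. a * Z \<omega>) -` {..a*x} \<inter> space M)"
        by (subst measure_distr) auto
      also have "(\<lambda>\<omega>. a * Z \<omega>) -` {..a*x} \<inter> space M = {\<omega>\<in>space M. Z \<omega> \<le> x}"
        using that by auto
      finally have r: "measure (distr M borel (\<lambda>\<omega>. a * Z \<omega>)) {..a*x} = G x" by (simp add: G_def)
      from l r eq have "G (a*x) / G a = G x" by simp
      thus ?thesis using Ga by (simp add: field_simps)
    qed
    define g where "g z = F (z/2) + 1 - F (1 - z/2)" for z
    have "isCont g 0" unfolding g_def by (intro continuous_intros isCont_o2[OF _ Fcont]) simp_all
    hence "g \<midarrow>0\<rightarrow> g 0" by (simp add: isCont_def)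
    moreover have "g 0 = 0" using F0 F1 by (simp add: g_def)
    ultimately obtain d where d: "d > 0" "\<And>x. x \<noteq> 0 \<and> norm (x - 0) < d \<Longrightarrow> norm (g x - 0) < 1/2"
      using LIM_D[of g 0 0 "1/2"] by auto
    define x0 where "x0 = min (d/2) (1/2)"
    have x0: "x0 > 0" "x0 < 1" using d by (auto simp: x0_def)
    have "x0 \<noteq> 0 \<and> norm (x0 - 0) < d" using x0 d by (auto simp: x0_def)
    hence "norm (g x0) < 1/2" using d(2)[of x0] by simp
    hence Gx0: "G x0 < 1" using Glt1[OF x0(2)] unfolding g_def real_norm_def by linarith
    obtain \<delta> where \<delta>: "\<delta> > 0" "\<And>x. 0 < x \<Longrightarrow> x \<le> 1 \<Longrightarrow> G x = x powr \<delta>"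
    proof -
      have "\<exists>\<delta>>0. \<forall>x. 0 < x \<longrightarrow> x \<le> 1 \<longrightarrow> G x = x powr \<delta>"
      proof (rule mult_cauchy[of G x0])
        show "G x \<le> G y" if "0 < x" "x \<le> y" "y \<le> 1" for x y using Gmono that by simp
        show "G x > 0" if "0 < x" "x \<le> 1" for x
          using La that Gge1[of 1] by (cases "x = 1") auto
        show "G 1 = 1" by (rule Gge1) simp
      qed (use Gmult x0 Gx0 in auto)
      thus ?thesis using that by blast
    qed
    have Gpow: "G x = x powr \<delta>" if "0 \<le> x" "x \<le> 1" for x
      using \<delta>(2)[of x] G0 that by (cases "x = 0") auto
    define c where "c = F (1/2)"
    have indZ: "P.indep_var borel (\<lambda>\<omega>. indicator {..1/2::real} (Y \<omega>) :: real) borel Z"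
      by (rule indep_iff[OF Lb])
    have AZ: "P.prob {\<omega>\<in>space M. Y \<omega> \<le> 1/2 \<and> Z \<omega> \<le> z} = c * G z" for z
    proof -
      have "P.prob ((\<lambda>\<omega>. (indicator {..1/2::real} (Y \<omega>) :: real, Z \<omega>)) -` ({1} \<times> {..z}) \<inter> space M) =
        P.prob ((\<lambda>\<omega>. indicator {..1/2::real} (Y \<omega>) :: real) -` {1} \<inter> space M) * P.prob (Z -` {..z} \<inter> space M)"
        by (rule P.indep_varD[OF indZ]) auto
      moreover have "(\<lambda>\<omega>. (indicator {..1/2::real} (Y \<omega>) :: real, Z \<omega>)) -` ({1} \<times> {..z}) \<inter> space M
          = {\<omega>\<in>space M. Y \<omega> \<le> 1/2 \<and> Z \<omega> \<le> z}" by (auto simp: indicator_def)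
      moreover have "(\<lambda>\<omega>. indicator {..1/2::real} (Y \<omega>) :: real) -` {1} \<inter> space M
          = {\<omega>\<in>space M. Y \<omega> \<le> 1/2}" by (auto simp: indicator_def)
      moreover have "Z -` {..z} \<inter> space M = {\<omega>\<in>space M. Z \<omega> \<le> z}" by auto
      ultimately show ?thesis using Fev[of "1/2"] by (simp add: c_def G_def)
    qed
    have c01: "c \<in> {0..1}" unfolding c_def Fev[of "1/2", symmetric] by (auto simp del: Fev)
    have two: "2 powr \<delta> * (1/2) powr \<delta> = 1" by (simp flip: powr_mult)
    show ?thesis
    proof (intro bexI[OF _ c01] exI[of _ \<delta>] conjI \<delta>(1) allI impI)
      fix x :: real assume x: "x \<in> {0..1/2}"
      have "{\<omega>\<in>space M. Y \<omega> \<le> x} = {\<omega>\<in>space M. Y \<omega> \<le> 1/2 \<and> Z \<omega> \<le> 2*x}"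
        using x Y01 by (auto simp: Z_def min_def)
      hence "F x = c * G (2*x)" using Fev[of x] AZ[of "2*x"] by simp
      also have "\<dots> = c * (2*x) powr \<delta>" using x by (subst Gpow) auto
      finally show "F x = c * 2 powr \<delta> * x powr \<delta>" using x by (simp add: powr_mult)
    next
      fix x :: real assume x: "x \<in> {1/2..1}"
      show "F x = 1 - (1 - c) * 2 powr \<delta> * (1 - x) powr \<delta>"
      proof (cases "x = 1/2")
        case True
        hence e: "x = 1/2" by simp
        have "(1 - (1/2::real)) = 1/2" by simp
        thus ?thesis unfolding e using two by (simp add: c_def mult.assoc)
      next
        case False
        hence x': "1/2 < x" "x \<le> 1" using x by auto
        define z where "z = 2 * (1 - x)"
        have "{\<omega>\<in>space M. x \<le> Y \<omega>} = {\<omega>\<in>space M. Z \<omega> \<le> z} - {\<omega>\<in>space M. Y \<omega> \<le> 1/2 \<and> Z \<omega> \<le> z}"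
          using x' Y01 by (auto simp: Z_def min_def z_def)
        moreover have "{\<omega>\<in>space M. Y \<omega> \<le> 1/2 \<and> Z \<omega> \<le> z} \<in> P.events" by measurable
        moreover have "{\<omega>\<in>space M. Z \<omega> \<le> z} \<in> P.events" by measurable
        moreover have "{\<omega>\<in>space M. Y \<omega> \<le> 1/2 \<and> Z \<omega> \<le> z} \<subseteq> {\<omega>\<in>space M. Z \<omega> \<le> z}" by auto
        ultimately have "P.prob {\<omega>\<in>space M. x \<le> Y \<omega>} = G z - P.prob {\<omega>\<in>space M. Y \<omega> \<le> 1/2 \<and> Z \<omega> \<le> z}"
          unfolding G_def by (simp only: P.finite_measure_Diff)
        hence "1 - F x = G z - c * G z"
          using Fge[of x] AZ[of z] by simp
        also have "G z = z powr \<delta>" using x' by (intro Gpow) (auto simp: z_def)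
        also have "z powr \<delta> = 2 powr \<delta> * (1 - x) powr \<delta>" unfolding z_def using x' by (simp only: powr_mult)
        finally show ?thesis by (simp add: algebra_simps)
      qed
    qed
  qed
  have bwd: "(\<forall>a\<in>{0<..<1::real}. G a > 0 \<and>
             distr (uniform_measure M {\<omega>\<in>space M. Z \<omega> \<le> a}) borel Z = distr M borel (\<lambda>\<omega>. a * Z \<omega>))
         \<and> P.indep_var borel (\<lambda>\<omega>. indicator {..1/2::real} (Y \<omega>) :: real) borel (\<lambda>\<omega>. max (Y \<omega>) (1 - Y \<omega>))"
    if "c \<in> {0..1::real}" "\<delta> > 0" and Fform: "\<forall>x.
        (x \<in> {0..1/2} \<longrightarrow> F x = c * 2 powr \<delta> * x powr \<delta>) \<and>
        (x \<in> {1/2..1} \<longrightarrow> F x = 1 - (1 - c) * 2 powr \<delta> * (1 - x) powr \<delta>)" for c \<delta>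
  proof -
    have Fa: "F x = c * 2 powr \<delta> * x powr \<delta>" if "0 \<le> x" "x \<le> 1/2" for x using Fform that by auto
    have Fb: "F x = 1 - (1 - c) * 2 powr \<delta> * (1 - x) powr \<delta>" if "1/2 \<le> x" "x \<le> 1" for x
      using Fform that by auto
    have Gpow: "G z = z powr \<delta>" if "0 \<le> z" "z \<le> 1" for z
    proof (cases "z = 1")
      case True thus ?thesis using Gge1 by simp
    next
      case False
      hence z1: "z < 1" using that by simp
      have "G z = F (z/2) + 1 - F (1 - z/2)" by (rule Glt1[OF z1])
      also have "F (z/2) = c * 2 powr \<delta> * (z/2) powr \<delta>" using that by (intro Fa) auto
      also have "F (1 - z/2) = 1 - (1 - c) * 2 powr \<delta> * (z/2) powr \<delta>"
        using Fb[of "1 - z/2"] that z1 by simp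
      finally have "G z = c * 2 powr \<delta> * (z / 2) powr \<delta> + (1 - c) * 2 powr \<delta> * (z / 2) powr \<delta>"
        by simp
      also have "\<dots> = 2 powr \<delta> * (z/2) powr \<delta>" by (simp add: algebra_simps)
      also have "2 powr \<delta> * (z/2) powr \<delta> = z powr \<delta>"
        using that by (simp flip: powr_mult)
      finally show ?thesis .
    qed
    have Gval: "G z = (if z < 0 then 0 else if z \<le> 1 then z powr \<delta> else 1)" for z
      using Gpow Gneg Gge1 by auto
    have cF: "F (1/2) = c"
    proof -
      have "F (1/2) = c * (2 powr \<delta> * (1/2) powr \<delta>)" using Fa[of "1/2"] by (simp add: mult.assoc)
      also have "2 powr \<delta> * (1/2) powr \<delta> = 1" by (simp flip: powr_mult)
      finally show ?thesis by simp
    qed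
    have partA: "G a > 0 \<and> distr (uniform_measure M {\<omega>\<in>space M. Z \<omega> \<le> a}) borel Z = distr M borel (\<lambda>\<omega>. a * Z \<omega>)"
      if a: "0 < a" "a < 1" for a
    proof
      show Ga: "G a > 0" using Gpow[of a] a by simp
      define S where "S = {\<omega>\<in>space M. Z \<omega> \<le> a}"
      have e1: "emeasure M S \<noteq> 0" using Ga by (simp add: S_def G_def P.emeasure_eq_measure)
      have e2: "emeasure M S \<noteq> \<infinity>" by (simp add: P.emeasure_eq_measure)
      have PS: "prob_space (uniform_measure M S)" by (rule prob_space_uniform_measure[OF e1 e2])
      have RD1: "real_distribution (distr (uniform_measure M S) borel Z)"
        by (rule prob_space.real_distribution_distr[OF PS]) simp
      have RD2: "real_distribution (distr M borel (\<lambda>\<omega>. a * Z \<omega>))"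
        by (rule P.real_distribution_distr) simp
      have "cdf (distr (uniform_measure M S) borel Z) = cdf (distr M borel (\<lambda>\<omega>. a * Z \<omega>))"
      proof
        fix x
        have "cdf (distr (uniform_measure M S) borel Z) x =
            measure (uniform_measure M S) (Z -` {..x} \<inter> space M)"
          by (simp add: cdf_def measure_distr)
        also have "\<dots> = P.prob (S \<inter> (Z -` {..x} \<inter> space M)) / P.prob S"
          using e1 e2 by (subst measure_uniform_measure) auto
        also have "S \<inter> (Z -` {..x} \<inter> space M) = {\<omega>\<in>space M. Z \<omega> \<le> min x a}"
          by (auto simp: S_def)
        finally have l: "cdf (distr (uniform_measure M S) borel Z) x = G (min x a) / G a"
          by (simp add: G_def S_def)
        have "cdf (distr M borel (\<lambda>\<omega>. a * Z \<omega>)) x = P.prob ((\<lambda>\<omega>. a * Z \<omega>) -` {..x} \<inter> space M)"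
          by (simp add: cdf_def measure_distr)
        also have "(\<lambda>\<omega>. a * Z \<omega>) -` {..x} \<inter> space M = {\<omega>\<in>space M. Z \<omega> \<le> x / a}"
          using a by (auto simp: field_simps)
        finally have r: "cdf (distr M borel (\<lambda>\<omega>. a * Z \<omega>)) x = G (x / a)" by (simp add: G_def)
        have "G (min x a) / G a = G (x / a)"
        proof (cases "x < 0")
          case True
          hence "x / a < 0" using a by (simp add: divide_neg_pos)
          thus ?thesis using True a by (simp add: Gval)
        next
          case False
          show ?thesis
          proof (cases "x \<le> a")
            case True
            hence "x / a \<le> 1" using a by simp
            moreover have "0 \<le> x / a" using False a by simp
            ultimately show ?thesis using True False a Gpow[of x] Gpow[of a] Gpow[of "x/a"]
              by (simp add: powr_divide)
          next
            case xa: False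
            hence "x / a > 1" using a by simp
            thus ?thesis using xa Ga by (simp add: Gge1)
          qed
        qed
        thus "cdf (distr (uniform_measure M S) borel Z) x = cdf (distr M borel (\<lambda>\<omega>. a * Z \<omega>)) x"
          using l r by simp
      qed
      thus "distr (uniform_measure M {\<omega>\<in>space M. Z \<omega> \<le> a}) borel Z = distr M borel (\<lambda>\<omega>. a * Z \<omega>)"
        using cdf_unique[OF RD1 RD2] by (simp add: S_def)
    qed
    define I where "I \<omega> = (indicator {..1/2::real} (Y \<omega>) :: real)" for \<omega>
    define A where "A = {\<omega>\<in>space M. Y \<omega> \<le> 1/2}"
    have Aev: "A \<in> P.events" unfolding A_def by measurable
    define GA where "GA = {A}"
    define GZ where "GZ = range (\<lambda>z. {\<omega>\<in>space M. Z \<omega> \<le> z})"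
    have AZ: "P.prob (A \<inter> {\<omega>\<in>space M. Z \<omega> \<le> z}) = P.prob A * G z" for z
    proof -
      have PA: "P.prob A = c" using Fev[of "1/2"] cF by (simp add: A_def)
      consider "z < 0" | "0 \<le> z" "z < 1" | "1 \<le> z" by linarith
      thus ?thesis
      proof cases
        case 1
        hence "A \<inter> {\<omega>\<in>space M. Z \<omega> \<le> z} = {}" using Y01 by (force simp: Z_def min_def)
        thus ?thesis using 1 Gneg by simp
      next
        case 2
        hence "A \<inter> {\<omega>\<in>space M. Z \<omega> \<le> z} = {\<omega>\<in>space M. Y \<omega> \<le> z/2}" using Y01
          by (auto simp: A_def Z_def min_def)
        hence "P.prob (A \<inter> {\<omega>\<in>space M. Z \<omega> \<le> z}) = F (z/2)" using Fev[of "z/2"] by (simp only:)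
        also have "\<dots> = c * (2 powr \<delta> * (z/2) powr \<delta>)" using 2 Fa[of "z/2"] by (simp add: mult.assoc)
        also have "2 powr \<delta> * (z/2) powr \<delta> = z powr \<delta>" using 2 by (simp flip: powr_mult)
        finally show ?thesis using 2 Gpow PA by simp
      next
        case 3
        hence "A \<inter> {\<omega>\<in>space M. Z \<omega> \<le> z} = A" using Y01
          by (auto simp: A_def Z_def min_def)
        thus ?thesis using 3 Gge1 by simp
      qed
    qed
    have indAZ: "P.indep_set GA GZ"
      unfolding P.indep_sets2_eq
    proof (intro conjI ballI)
      show "GA \<subseteq> P.events" using Aev by (simp add: GA_def)
      show "GZ \<subseteq> P.events" unfolding GZ_def by auto
      fix a b assume "a \<in> GA" "b \<in> GZ"
      thus "P.prob (a \<inter> b) = P.prob a * P.prob b" using AZ by (auto simp: GA_def GZ_def G_def)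
    qed
    have h1: "P.indep_set (sigma_sets (space M) GA) (sigma_sets (space M) GZ)"
    proof (rule P.indep_set_sigma_sets[OF indAZ])
      show "Int_stable GA" by (auto simp: GA_def Int_stable_def)
      show "Int_stable GZ" unfolding GZ_def Int_stable_def
      proof (safe)
        fix x y
        have "{\<omega>\<in>space M. Z \<omega> \<le> x} \<inter> {\<omega>\<in>space M. Z \<omega> \<le> y} = {\<omega>\<in>space M. Z \<omega> \<le> min x y}" by auto
        thus "{\<omega>\<in>space M. Z \<omega> \<le> x} \<inter> {\<omega>\<in>space M. Z \<omega> \<le> y} \<in> range (\<lambda>z. {\<omega>\<in>space M. Z \<omega> \<le> z})"
          by blast
      qed
    qed
    have h2: "sigma_sets (space M) {I -` B \<inter> space M | B. B \<in> sets borel} \<subseteq> sigma_sets (space M) GA"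
    proof (rule sigma_sets_mono, rule vimage_sigma_sub)
      show "GA \<subseteq> Pow (space M)" using Aev sets.sets_into_space by (auto simp: GA_def)
      fix a :: real
      have A': "A \<in> sigma_sets (space M) GA" by (simp add: GA_def)
      consider "a < 0" | "0 \<le> a" "a < 1" | "1 \<le> a" by linarith
      thus "{w \<in> space M. I w \<le> a} \<in> sigma_sets (space M) GA"
      proof cases
        case 1
        hence "{w \<in> space M. I w \<le> a} = {}" by (auto simp: I_def indicator_def)
        thus ?thesis by (metis sigma_sets.Empty)
      next
        case 2
        hence "{w \<in> space M. I w \<le> a} = space M - A" by (auto simp: I_def indicator_def A_def)
        thus ?thesis using A' by (simp add: sigma_sets.Compl)
      next
        case 3
        hence "{w \<in> space M. I w \<le> a} = space M - {}" by (auto simp: I_def indicator_def)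
        thus ?thesis by (metis sigma_sets.Compl sigma_sets.Empty)
      qed
    qed
    have h3: "sigma_sets (space M) {Z -` B \<inter> space M | B. B \<in> sets borel} \<subseteq> sigma_sets (space M) GZ"
    proof (rule sigma_sets_mono, rule vimage_sigma_sub)
      show "GZ \<subseteq> Pow (space M)" by (auto simp: GZ_def)
      fix a :: real
      show "{w \<in> space M. Z w \<le> a} \<in> sigma_sets (space M) GZ" by (auto simp: GZ_def)
    qed
    have "P.indep_set (sigma_sets (space M) {I -` B \<inter> space M | B. B \<in> sets borel})
        (sigma_sets (space M) {Z -` B \<inter> space M | B. B \<in> sets borel})"
      unfolding P.indep_set_def
      by (rule P.indep_sets_mono_sets[OF h1[unfolded P.indep_set_def]]) (use h2 h3 in \<open>auto split: bool.split\<close>)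
    moreover have "I \<in> borel_measurable M" unfolding I_def
      by (rule borel_measurable_indicator') measurable
    ultimately have indIZ: "P.indep_var borel I borel Z" by (simp add: P.indep_var_eq)
    have "P.indep_var borel (id \<circ> I) borel ((\<lambda>z. 1 - z / 2) \<circ> Z)"
      by (rule P.indep_var_compose[OF indIZ]) auto
    moreover have "id \<circ> I = (\<lambda>\<omega>. indicator {..1/2::real} (Y \<omega>) :: real)" by (simp add: I_def fun_eq_iff)
    moreover have "(\<lambda>z. 1 - z / 2) \<circ> Z = (\<lambda>\<omega>. max (Y \<omega>) (1 - Y \<omega>))"
      by (auto simp: Z_def max_def min_def fun_eq_iff)
    ultimately have "P.indep_var borel (\<lambda>\<omega>. indicator {..1/2::real} (Y \<omega>) :: real) borel (\<lambda>\<omega>. max (Y \<omega>) (1 - Y \<omega>))"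
      by simp
    thus ?thesis using partA by auto
  qed
  show ?thesis
    unfolding Z_def[symmetric] N_def[symmetric] F_def[symmetric] G_def[symmetric]
    using fwd bwd by blast
qed
end
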